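(* Let $M$ be a finite matroid, $k\ge0$, let $e_1,\dots,e_k$ be distinct elements of $M$ and $C_0,C_1,\dots,C_k$ subsets of $M$ such that $|C_i|\ge3$ for $i=0,\dots,k$, $C_{i-1}\cap C_i=\{e_i\}$ for $i=1,\dots,k$, and $C_i\cap C_j=\emptyset$ whenever $|i-j|\ge2$. Let $e_0\in C_0\setminus\{e_1\}$ and, for $i=1,\dots,k$, let $e_i'\in C_{i-1}\setminus\{e_{i-1},e_i\}$. Define $M_0=M$ and $M_i=M_{i-1}/(C_{i-1}\setminus\{e_i,e_i'\})$ for $i=1,\dots,k$, and suppose $C_i$ is a circuit in $M_i$ for every $i=0,\dots,k$. Then $M$ contains a circuit of length at least $\sqrt{\sum_{i=0}^k|C_i|}$.
   Context: For a finite matroid $M$ with rank function $r_M$ and $F\subseteq M$, the contraction $M/F$ has ground set $M\setminus F$, and $F'\subseteq M\setminus F$ is independent in $M/F$ iff $F'$ is independent in $M$ and $r_M(F\cup F')=r_M(F)+r_M(F')$. A circuit is a minimal dependent set; its length is its number of elements. *)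

theory Defs
  imports Complex_Main
begin

type_synonym 'a matroid = "'a set \<times> ('a set \<Rightarrow> bool)"

definition ground :: "'a matroid \<Rightarrow> 'a set" where
  "ground M = fst M"

definition indep :: "'a matroid \<Rightarrow> 'a set \<Rightarrow> bool" where
  "indep M X = snd M X"

definition finite_matroid :: "'a matroid \<Rightarrow> bool" where
  "finite_matroid M \<longleftrightarrow>
     finite (ground M)
   \<and> (\<forall>X. indep M X \<longrightarrow> X \<subseteq> ground M)
   \<and> indep M {}
   \<and> (\<forall>X Y. indep M Y \<and> X \<subseteq> Y \<longrightarrow> indep M X)
   \<and> (\<forall>X Y. indep M X \<and> indep M Y \<and> card X < card Y \<longrightarrow>
        (\<exists>y\<in>Y - X. indep M (insert y X)))"

definition rank :: "'a matroid \<Rightarrow> 'a set \<Rightarrow> nat" where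
  "rank M X = Max {card I | I. I \<subseteq> X \<and> indep M I}"

definition contract :: "'a matroid \<Rightarrow> 'a set \<Rightarrow> 'a matroid" where
  "contract M F = (ground M - F,
     (\<lambda>F'. F' \<subseteq> ground M - F \<and> indep M F' \<and> rank M (F \<union> F') = rank M F + rank M F'))"

definition circuit :: "'a matroid \<Rightarrow> 'a set \<Rightarrow> bool" where
  "circuit M C \<longleftrightarrow> C \<subseteq> ground M \<and> \<not> indep M C \<and> (\<forall>D. D \<subset> C \<longrightarrow> indep M D)"

primrec contr_seq :: "'a matroid \<Rightarrow> (nat \<Rightarrow> 'a set) \<Rightarrow> (nat \<Rightarrow> 'a) \<Rightarrow> (nat \<Rightarrow> 'a) \<Rightarrow> nat \<Rightarrow> 'a matroid" where
  "contr_seq M C e e' 0 = M"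
| "contr_seq M C e e' (Suc i) = contract (contr_seq M C e e' i) (C i - {e (Suc i), e' (Suc i)})"

end

theory Submission
  imports Defs
begin

lemma fm_D:
  assumes "finite_matroid M"
  shows "finite (ground M)" "indep M X \<Longrightarrow> X \<subseteq> ground M" "indep M {}"
    "indep M Y \<Longrightarrow> X \<subseteq> Y \<Longrightarrow> indep M X"
    "indep M X \<Longrightarrow> indep M Y \<Longrightarrow> card X < card Y \<Longrightarrow> \<exists>y\<in>Y - X. indep M (insert y X)"
proof -
  have A: "finite (ground M)" "\<forall>X. indep M X \<longrightarrow> X \<subseteq> ground M" "indep M {}"
    "\<forall>X Y. indep M Y \<and> X \<subseteq> Y \<longrightarrow> indep M X"
    "\<forall>X Y. indep M X \<and> indep M Y \<and> card X < card Y \<longrightarrow> (\<exists>y\<in>Y - X. indep M (insert y X))"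
    using assms unfolding finite_matroid_def by simp_all
  show "finite (ground M)" "indep M {}" using A(1,3) .
  show "indep M X \<Longrightarrow> X \<subseteq> ground M" using A(2) by simp
  show "indep M Y \<Longrightarrow> X \<subseteq> Y \<Longrightarrow> indep M X" using A(4) by blast
  show "indep M X \<Longrightarrow> indep M Y \<Longrightarrow> card X < card Y \<Longrightarrow> \<exists>y\<in>Y - X. indep M (insert y X)"
    using A(5) by simp
qed

lemma indep_finite: "finite_matroid M \<Longrightarrow> indep M X \<Longrightarrow> finite X"
  using fm_D(1,2) finite_subset by metis

lemma rank_set_fin:
  assumes fm: "finite_matroid M"
  shows "finite {card I | I. I \<subseteq> X \<and> indep M I}"
proof -
  have "{card I | I. I \<subseteq> X \<and> indep M I} \<subseteq> {..card (ground M)}"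
    using fm_D(1,2)[OF fm] card_mono by fastforce
  then show ?thesis using finite_subset by blast
qed

lemma rank_ex:
  assumes fm: "finite_matroid M"
  shows "\<exists>I. I \<subseteq> X \<and> indep M I \<and> card I = rank M X"
proof -
  have ne: "{card I | I. I \<subseteq> X \<and> indep M I} \<noteq> {}" using fm_D(3)[OF fm] by blast
  have "rank M X \<in> {card I | I. I \<subseteq> X \<and> indep M I}"
    unfolding rank_def using Max_in[OF rank_set_fin[OF fm] ne] .
  then show ?thesis by auto
qed

lemma rank_ge:
  assumes fm: "finite_matroid M" and "indep M I" "I \<subseteq> X"
  shows "card I \<le> rank M X"
  unfolding rank_def using assms by (intro Max_ge[OF rank_set_fin[OF fm]]) auto

lemma extend:
  assumes fm: "finite_matroid M" and "indep M I" "I \<subseteq> X"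
  shows "\<exists>B. I \<subseteq> B \<and> B \<subseteq> X \<and> indep M B \<and> card B = rank M X"
proof -
  obtain J where J: "J \<subseteq> X" "indep M J" "card J = rank M X" using rank_ex[OF fm] by blast
  have "\<forall>I. indep M I \<and> I \<subseteq> X \<longrightarrow> (\<exists>B. I \<subseteq> B \<and> B \<subseteq> X \<and> indep M B \<and> card B = rank M X)"
    (is "\<forall>I. ?P I")
  proof (rule allI)
    fix I show "?P I"
    proof (induction "rank M X - card I" arbitrary: I rule: less_induct)
      case less
      show ?case
      proof (intro impI)
        assume I: "indep M I \<and> I \<subseteq> X"
        have le: "card I \<le> rank M X" using rank_ge[OF fm] I by blast
        show "\<exists>B. I \<subseteq> B \<and> B \<subseteq> X \<and> indep M B \<and> card B = rank M X"
        proof (cases "card I = rank M X")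
          case True then show ?thesis using I by blast
        next
          case False
          then have "card I < card J" using le J by simp
          then obtain y where y: "y \<in> J - I" "indep M (insert y I)" using fm_D(5)[OF fm] I J by blast
          have fin: "finite I" using I indep_finite[OF fm] by blast
          have "card (insert y I) = card I + 1" using y fin by simp
          then have lt: "rank M X - card (insert y I) < rank M X - card I" using False le by simp
          have "insert y I \<subseteq> X" using y I J by blast
          then obtain B where "insert y I \<subseteq> B \<and> B \<subseteq> X \<and> indep M B \<and> card B = rank M X"
            using less[OF lt] y by blast
          then show ?thesis by blast
        qed
      qed
    qed
  qed
  then show ?thesis using assms by blast
qed

lemma indep_rank:
  assumes fm: "finite_matroid M" and I: "indep M I" shows "rank M I = card I"
proof -
  obtain J where J: "J \<subseteq> I" "indep M J" "card J = rank M I" using rank_ex[OF fm] by blast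
  have "card J \<le> card I" using card_mono[OF indep_finite[OF fm I] J(1)] .
  moreover have "card I \<le> rank M I" using rank_ge[OF fm I] by blast
  ultimately show ?thesis using J by linarith
qed

lemma rank_indep:
  assumes fm: "finite_matroid M" and "I \<subseteq> ground M" "rank M I = card I"
  shows "indep M I"
proof -
  obtain J where J: "J \<subseteq> I" "indep M J" "card J = rank M I" using rank_ex[OF fm] by blast
  have "finite I" using assms fm_D(1) finite_subset by blast
  then have "J = I" using J assms card_subset_eq by metis
  then show ?thesis using J by simp
qed

lemma rank_mono:
  assumes fm: "finite_matroid M" and "X \<subseteq> Y" shows "rank M X \<le> rank M Y"
proof -
  obtain I where "I \<subseteq> X" "indep M I" "card I = rank M X" using rank_ex[OF fm] by blast
  then show ?thesis using rank_ge[OF fm, of I Y] assms by auto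
qed

lemma cl_mono:
  assumes fm: "finite_matroid M" and AA: "A \<subseteq> A'" and cl: "rank M (insert x A) = rank M A"
  shows "rank M (insert x A') = rank M A'"
proof (rule ccontr)
  assume ne: "rank M (insert x A') \<noteq> rank M A'"
  then have xA: "x \<notin> A'" by (metis insert_absorb)
  obtain I where I: "I \<subseteq> A" "indep M I" "card I = rank M A" using rank_ex[OF fm] by blast
  obtain J where J: "I \<subseteq> J" "J \<subseteq> A'" "indep M J" "card J = rank M A'"
    using extend[OF fm I(2)] I(1) AA by (meson order_trans)
  obtain K where K: "J \<subseteq> K" "K \<subseteq> insert x A'" "indep M K" "card K = rank M (insert x A')"
    using extend[OF fm J(3), of "insert x A'"] J(2) by blast
  have "rank M A' \<le> rank M (insert x A')" using rank_mono[OF fm] by blast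
  then have lt: "card J < card K" using ne J K by simp
  have "x \<in> K"
  proof (rule ccontr)
    assume "x \<notin> K"
    then have "K \<subseteq> A'" using K by blast
    then have "card K \<le> rank M A'" using rank_ge[OF fm K(3)] by blast
    then show False using lt J by simp
  qed
  then have "insert x I \<subseteq> K" using I J K by blast
  then have ind: "indep M (insert x I)" using fm_D(4)[OF fm K(3)] by blast
  have "x \<notin> I" using xA I AA by blast
  then have "card (insert x I) = card I + 1" using indep_finite[OF fm I(2)] by simp
  moreover have "card (insert x I) \<le> rank M (insert x A)" using rank_ge[OF fm ind] I by blast
  ultimately show False using cl I by linarith
qed

lemma circuitD:
  assumes "circuit M C"
  shows "C \<subseteq> ground M" "\<not> indep M C" "D \<subset> C \<Longrightarrow> indep M D"
  using assms unfolding circuit_def by blast+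

lemma circuit_finite: "finite_matroid M \<Longrightarrow> circuit M C \<Longrightarrow> finite C"
  using circuitD(1) fm_D(1) finite_subset by blast

lemma exists_circuit:
  assumes fm: "finite_matroid M"
  shows "A \<subseteq> ground M \<Longrightarrow> \<not> indep M A \<Longrightarrow> \<exists>C. C \<subseteq> A \<and> circuit M C"
proof (induction "card A" arbitrary: A rule: less_induct)
  case less
  show ?case
  proof (cases "\<forall>D. D \<subset> A \<longrightarrow> indep M D")
    case True
    then have "circuit M A" using less.prems unfolding circuit_def by blast
    then show ?thesis by blast
  next
    case False
    then obtain D where D: "D \<subset> A" "\<not> indep M D" by blast
    have "finite A" using less.prems fm_D(1)[OF fm] finite_subset by blast
    then have "card D < card A" using D psubset_card_mono by blast
    then obtain C where "C \<subseteq> D \<and> circuit M C" using less.hyps[of D] D less.prems by blast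
    then show ?thesis using D by blast
  qed
qed

lemma circuit_cl:
  assumes fm: "finite_matroid M" and C: "circuit M C" and e: "e \<in> C"
  shows "rank M (insert e (C - {e})) = rank M (C - {e})"
proof -
  have fin: "finite C" using circuit_finite[OF fm C] .
  have ind: "indep M (C - {e})" using circuitD(3)[OF C] e by blast
  have r1: "rank M (C - {e}) = card C - 1" using indep_rank[OF fm ind] fin e by simp
  have CC: "insert e (C - {e}) = C" using e by blast
  obtain I where I: "I \<subseteq> C" "indep M I" "card I = rank M C" using rank_ex[OF fm] by blast
  have "rank M C \<le> card C" using I card_mono[OF fin, of I] by simp
  moreover have "rank M C \<noteq> card C" using rank_indep[OF fm circuitD(1)[OF C]] circuitD(2)[OF C] by blast
  moreover have "rank M (C - {e}) \<le> rank M C" using rank_mono[OF fm] by blast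
  moreover have "card C \<ge> 1" using fin e by (simp add: Suc_le_eq card_gt_0_iff) blast
  ultimately have "rank M C = rank M (C - {e})" using r1 by linarith
  then show ?thesis using CC by simp
qed

lemma cl_circuit:
  assumes fm: "finite_matroid M" and A: "A \<subseteq> ground M" and f: "f \<in> ground M" "f \<notin> A"
    and cl: "rank M (insert f A) = rank M A"
  shows "\<exists>Z. circuit M Z \<and> f \<in> Z \<and> Z \<subseteq> insert f A"
proof -
  obtain I where I: "I \<subseteq> A" "indep M I" "card I = rank M A" using rank_ex[OF fm] by blast
  have nI: "\<not> indep M (insert f I)"
  proof
    assume ind: "indep M (insert f I)"
    have "f \<notin> I" using f I by blast
    then have "card (insert f I) = card I + 1" using indep_finite[OF fm I(2)] by simp
    moreover have "card (insert f I) \<le> rank M (insert f A)" using rank_ge[OF fm ind] I by blast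
    ultimately show False using cl I by linarith
  qed
  have "insert f I \<subseteq> ground M" using I A f by blast
  then obtain Z where Z: "Z \<subseteq> insert f I" "circuit M Z" using exists_circuit[OF fm] nI by blast
  have "f \<in> Z"
  proof (rule ccontr)
    assume "f \<notin> Z"
    then have "Z \<subseteq> I" using Z by blast
    then show False using fm_D(4)[OF fm I(2)] circuitD(2)[OF Z(2)] by blast
  qed
  then show ?thesis using Z I by blast
qed

lemma strong_elim:
  assumes fm: "finite_matroid M" and C1: "circuit M C1" and C2: "circuit M C2"
    and e: "e \<in> C1" "e \<in> C2" and f: "f \<in> C1" "f \<notin> C2"
  shows "\<exists>Z. circuit M Z \<and> f \<in> Z \<and> Z \<subseteq> (C1 \<union> C2) - {e}"
proof -
  define A where "A = (C1 \<union> C2) - {e, f}"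
  have a1: "rank M (insert e (C2 - {e})) = rank M (C2 - {e})" using circuit_cl[OF fm C2 e(2)] .
  have a2: "C2 - {e} \<subseteq> A" using f unfolding A_def by blast
  have r1: "rank M (insert e A) = rank M A" using cl_mono[OF fm a2 a1] .
  have b1: "rank M (insert f (C1 - {f})) = rank M (C1 - {f})" using circuit_cl[OF fm C1 f(1)] .
  have b2: "C1 - {f} \<subseteq> insert e A" unfolding A_def by blast
  have r2: "rank M (insert f (insert e A)) = rank M (insert e A)" using cl_mono[OF fm b2 b1] .
  have c1: "rank M A \<le> rank M (insert f A)" using rank_mono[OF fm, of A "insert f A"] by blast
  have c2: "rank M (insert f A) \<le> rank M (insert f (insert e A))"
    using rank_mono[OF fm, of "insert f A" "insert f (insert e A)"] by blast
  have cl: "rank M (insert f A) = rank M A" using r1 r2 c1 c2 by linarith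
  have gA: "A \<subseteq> ground M" using circuitD(1)[OF C1] circuitD(1)[OF C2] unfolding A_def by blast
  have fg: "f \<in> ground M" "f \<notin> A" using circuitD(1)[OF C1] f unfolding A_def by blast+
  obtain Z where "circuit M Z \<and> f \<in> Z \<and> Z \<subseteq> insert f A" using cl_circuit[OF fm gA fg cl] by blast
  moreover have "insert f A \<subseteq> (C1 \<union> C2) - {e}" using e f unfolding A_def by blast
  ultimately show ?thesis by blast
qed

lemma contract_ground: "ground (contract M F) = ground M - F"
  by (simp add: ground_def contract_def)

lemma contract_indep:
  assumes fm: "finite_matroid M" and X: "indep M X"
  shows "indep (contract M X) Y \<longleftrightarrow> Y \<subseteq> ground M - X \<and> indep M (X \<union> Y)"
proof -
  have d: "indep (contract M X) Y \<longleftrightarrow> Y \<subseteq> ground M - X \<and> indep M Y \<and> rank M (X \<union> Y) = rank M X + rank M Y"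
    by (simp add: indep_def contract_def ground_def)
  have fX: "finite X" using indep_finite[OF fm X] .
  show ?thesis
  proof
    assume a: "indep (contract M X) Y"
    then have Y: "Y \<subseteq> ground M - X" "indep M Y" "rank M (X \<union> Y) = rank M X + rank M Y" using d by blast+
    have fY: "finite Y" using indep_finite[OF fm Y(2)] .
    have "card (X \<union> Y) = card X + card Y" using Y(1) fX fY by (subst card_Un_disjoint) auto
    then have "rank M (X \<union> Y) = card (X \<union> Y)" using Y indep_rank[OF fm] X by simp
    moreover have "X \<union> Y \<subseteq> ground M" using Y fm_D(2)[OF fm X] by blast
    ultimately show "Y \<subseteq> ground M - X \<and> indep M (X \<union> Y)" using rank_indep[OF fm] Y by blast
  next
    assume a: "Y \<subseteq> ground M - X \<and> indep M (X \<union> Y)"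
    then have iY: "indep M Y" using fm_D(4)[OF fm] by blast
    have fY: "finite Y" using indep_finite[OF fm iY] .
    have "card (X \<union> Y) = card X + card Y" using a fX fY by (subst card_Un_disjoint) auto
    then have "rank M (X \<union> Y) = rank M X + rank M Y" using indep_rank[OF fm] a iY X by simp
    then show "indep (contract M X) Y" using d a iY by blast
  qed
qed

lemma contract_fm:
  assumes fm: "finite_matroid M" and X: "indep M X"
  shows "finite_matroid (contract M X)"
  unfolding finite_matroid_def
proof (intro conjI allI impI)
  show "finite (ground (contract M X))" using fm_D(1)[OF fm] by (simp add: contract_ground)
  show "indep (contract M X) {}" using contract_indep[OF fm X] X by simp
next
  fix Y assume "indep (contract M X) Y"
  then show "Y \<subseteq> ground (contract M X)" using contract_indep[OF fm X] unfolding contract_ground by blast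
next
  fix Y Z assume a: "indep (contract M X) Z \<and> Y \<subseteq> Z"
  then have "Z \<subseteq> ground M - X" "indep M (X \<union> Z)" using contract_indep[OF fm X] by blast+
  moreover have "X \<union> Y \<subseteq> X \<union> Z" using a by blast
  ultimately have "Y \<subseteq> ground M - X" "indep M (X \<union> Y)" using a fm_D(4)[OF fm] by blast+
  then show "indep (contract M X) Y" using contract_indep[OF fm X] by blast
next
  fix I J assume a: "indep (contract M X) I \<and> indep (contract M X) J \<and> card I < card J"
  then have I: "I \<subseteq> ground M - X" "indep M (X \<union> I)" and J: "J \<subseteq> ground M - X" "indep M (X \<union> J)"
    using contract_indep[OF fm X] by blast+
  have fX: "finite X" using indep_finite[OF fm X] .
  have fI: "finite I" "finite J" using indep_finite[OF fm I(2)] indep_finite[OF fm J(2)] by auto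
  have "card (X \<union> I) = card X + card I" using I fX fI by (subst card_Un_disjoint) auto
  moreover have "card (X \<union> J) = card X + card J" using J fX fI by (subst card_Un_disjoint) auto
  ultimately have "card (X \<union> I) < card (X \<union> J)" using a by simp
  then obtain y where y: "y \<in> (X \<union> J) - (X \<union> I)" "indep M (insert y (X \<union> I))"
    using fm_D(5)[OF fm I(2) J(2)] by blast
  have "insert y I \<subseteq> ground M - X" using y I J by blast
  moreover have "X \<union> insert y I = insert y (X \<union> I)" by blast
  ultimately have "indep (contract M X) (insert y I)" using contract_indep[OF fm X] y by simp
  then show "\<exists>y\<in>J - I. indep (contract M X) (insert y I)" using y by blast
qed

lemma circuit_lift:
  assumes fm: "finite_matroid M" and X: "indep M X" and C: "circuit (contract M X) C"
  shows "\<exists>D. circuit M D \<and> C \<subseteq> D \<and> D \<subseteq> C \<union> X"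
proof -
  have Cg: "C \<subseteq> ground M - X" using circuitD(1)[OF C] contract_ground by metis
  have "\<not> indep M (X \<union> C)" using circuitD(2)[OF C] contract_indep[OF fm X] Cg by blast
  moreover have "X \<union> C \<subseteq> ground M" using Cg fm_D(2)[OF fm X] by blast
  ultimately obtain D where D: "D \<subseteq> X \<union> C" "circuit M D" using exists_circuit[OF fm] by blast
  have "C \<subseteq> D"
  proof (rule ccontr)
    assume "\<not> C \<subseteq> D"
    then have "D - X \<subset> C" using D by blast
    then have "indep (contract M X) (D - X)" using circuitD(3)[OF C] by blast
    then have "indep M (X \<union> (D - X))" using contract_indep[OF fm X] by blast
    then have "indep M D" using fm_D(4)[OF fm] by blast
    then show False using circuitD(2)[OF D(2)] by blast
  qed
  then show ?thesis using D by blast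
qed

lemma push:
  assumes fm: "finite_matroid M" and X: "indep M X" and Z: "circuit M Z"
  shows "\<not> indep (contract M X) (Z - X)"
proof
  assume "indep (contract M X) (Z - X)"
  then have "indep M (X \<union> (Z - X))" using contract_indep[OF fm X] by blast
  then have "indep M Z" using fm_D(4)[OF fm] by blast
  then show False using circuitD(2)[OF Z] by blast
qed


lemma step:
  assumes fm: "finite_matroid M" and C0: "circuit M C0"
    and e1: "e1 \<in> C0" and e1': "e1' \<in> C0" and e0: "e0 \<in> C0"
    and ne: "e0 \<noteq> e1" "e0 \<noteq> e1'" "e1 \<noteq> e1'"
    and Xd: "X = C0 - {e1, e1'}"
    and D': "circuit (contract M X) D'" and e1D: "e1 \<in> D'"
  shows "\<exists>Z. circuit M Z \<and> e0 \<in> Z \<and> card Z \<ge> card D' + 1"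
proof -
  have XC: "X \<subset> C0" using Xd e1 by blast
  have X: "indep M X" using circuitD(3)[OF C0 XC] .
  have D'g: "D' \<subseteq> ground M - X" using circuitD(1)[OF D'] unfolding contract_ground .
  have e0X: "e0 \<in> X" using e0 ne Xd by blast
  have e0D: "e0 \<notin> D'" using D'g e0X by blast
  have fD': "finite D'" using circuit_finite[OF contract_fm[OF fm X] D'] .
  have psub: "\<And>S. S \<subset> D' \<Longrightarrow> indep (contract M X) S" by (rule circuitD(3)[OF D'])
  obtain D1 where D1: "circuit M D1" "D' \<subseteq> D1" "D1 \<subseteq> D' \<union> X"
    using circuit_lift[OF fm X D'] by blast
  show ?thesis
  proof (cases "e0 \<in> D1")
    case True
    have "insert e0 D' \<subseteq> D1" using True D1 by blast
    then have "card (insert e0 D') \<le> card D1" using card_mono[OF circuit_finite[OF fm D1(1)]] by blast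
    then show ?thesis using D1 True e0D fD' by auto
  next
    case False
    obtain Z where Z: "circuit M Z" "e0 \<in> Z" "Z \<subseteq> (C0 \<union> D1) - {e1}"
      using strong_elim[OF fm C0 D1(1) e1 _ e0 False] e1D D1 by blast
    define S where "S = Z - X"
    have nS: "\<not> indep (contract M X) S" using push[OF fm X Z(1)] S_def by simp
    have SD: "S \<subseteq> (D' - {e1}) \<union> {e1'}" using Z D1 Xd unfolding S_def by blast
    have e1'D: "e1' \<notin> D'"
    proof
      assume "e1' \<in> D'"
      then have "S \<subset> D'" using SD e1D ne by blast
      then show False using psub nS by blast
    qed
    have Seq: "S = (D' - {e1}) \<union> {e1'}"
    proof (rule ccontr)
      assume "S \<noteq> (D' - {e1}) \<union> {e1'}"
      then obtain d where d: "d \<in> (D' - {e1}) \<union> {e1'}" "d \<notin> S" using SD by blast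
      show False
      proof (cases "e1' \<in> S")
        case False
        then have "S \<subset> D'" using SD e1D by blast
        then show False using psub nS by blast
      next
        case True
        then have dD: "d \<in> D'" "d \<noteq> e1" using d by auto
        have Sg: "S \<subseteq> ground M - X" using Z(1) circuitD(1) unfolding S_def by blast
        have "\<not> indep M (X \<union> S)" using nS contract_indep[OF fm X] Sg by blast
        moreover have "X \<union> S \<subseteq> ground M" using Sg fm_D(2)[OF fm X] by blast
        ultimately obtain Z1 where Z1: "Z1 \<subseteq> X \<union> S" "circuit M Z1" using exists_circuit[OF fm] by blast
        have nZ1: "\<not> indep (contract M X) (Z1 - X)" using push[OF fm X Z1(2)] .
        have e1'Z1: "e1' \<in> Z1"
        proof (rule ccontr)
          assume "e1' \<notin> Z1"
          then have "Z1 - X \<subset> D'" using Z1 SD d dD by blast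
          then show False using psub nZ1 by blast
        qed
        have e1Z1: "e1 \<notin> Z1" using Z1 SD ne Xd by blast
        obtain Z2 where Z2: "circuit M Z2" "e1 \<in> Z2" "Z2 \<subseteq> (C0 \<union> Z1) - {e1'}"
          using strong_elim[OF fm C0 Z1(2) e1' e1'Z1 e1 e1Z1] by blast
        have nZ2: "\<not> indep (contract M X) (Z2 - X)" using push[OF fm X Z2(1)] .
        have "Z2 - X \<subset> D'" using Z2 Z1 SD d dD Xd e1D by blast
        then show False using psub nZ2 by blast
      qed
    qed
    have "insert e0 ((D' - {e1}) \<union> {e1'}) \<subseteq> Z" using Seq Z(2) unfolding S_def by blast
    then have "card (insert e0 ((D' - {e1}) \<union> {e1'})) \<le> card Z"
      using card_mono[OF circuit_finite[OF fm Z(1)]] by blast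
    moreover have "e0 \<notin> (D' - {e1}) \<union> {e1'}" using e0D ne by blast
    moreover have "card ((D' - {e1}) \<union> {e1'}) = card D'" 
      using e1'D e1D fD' by (simp add: card_Diff_singleton) (metis One_nat_def Suc_pred card_gt_0_iff empty_iff)
    ultimately show ?thesis using Z fD' by auto
  qed
qed


lemma seq_shift:
  "contr_seq M C e e' (Suc i) =
   contr_seq (contract M (C 0 - {e 1, e' 1})) (\<lambda>i. C (Suc i)) (\<lambda>i. e (Suc i)) (\<lambda>i. e' (Suc i)) i"
  by (induction i) simp_all

lemma main:
  assumes "finite_matroid M" "inj_on e {1..k}" "\<forall>i\<le>k. card (C i) \<ge> 3"
    "\<forall>i\<in>{1..k}. C (i - 1) \<inter> C i = {e i}" "e 0 \<in> C 0" "k \<ge> 1 \<longrightarrow> e 0 \<noteq> e 1"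
    "\<forall>i\<in>{1..k}. e' i \<in> C (i - 1) - {e (i - 1), e i}"
    "\<forall>i\<le>k. circuit (contr_seq M C e e' i) (C i)"
  shows "(\<exists>D. circuit M D \<and> e 0 \<in> D \<and> card D \<ge> k + 2) \<and> (\<forall>i\<le>k. \<exists>D. circuit M D \<and> card D \<ge> card (C i))"
  using assms
proof (induction k arbitrary: M C e e')
  case 0
  have c: "circuit M (C 0)" using 0(8) by simp
  have "card (C 0) \<ge> 3" using 0(3) by simp
  then show ?case using c 0(5) by auto
next
  case (Suc k)
  note fm = Suc.prems(1)
  define X where "X = C 0 - {e 1, e' 1}"
  define M1 where "M1 = contract M X"
  have c0: "circuit M (C 0)" using Suc.prems(8) by fastforce
  have "C (1 - 1) \<inter> C 1 = {e 1}" using Suc.prems(4) by (intro bspec[of _ _ 1]) auto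
  then have e1: "e 1 \<in> C 0" "e 1 \<in> C 1" by auto
  have "e' 1 \<in> C (1 - 1) - {e (1 - 1), e 1}" using Suc.prems(7) by (intro bspec[of _ _ 1]) auto
  then have e1': "e' 1 \<in> C 0" "e' 1 \<noteq> e 0" "e' 1 \<noteq> e 1" by auto
  have XC: "X \<subset> C 0" using e1 unfolding X_def by blast
  have indX: "indep M X" using circuitD(3)[OF c0 XC] .
  have fm1: "finite_matroid M1" unfolding M1_def using contract_fm[OF fm indX] .
  have IH: "(\<exists>D. circuit M1 D \<and> e (Suc 0) \<in> D \<and> card D \<ge> k + 2) \<and>
      (\<forall>i\<le>k. \<exists>D. circuit M1 D \<and> card D \<ge> card (C (Suc i)))"
  proof (rule Suc.IH[of M1 "\<lambda>i. e (Suc i)" "\<lambda>i. C (Suc i)" "\<lambda>i. e' (Suc i)"])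
    show "finite_matroid M1" by (rule fm1)
    show "inj_on (\<lambda>i. e (Suc i)) {1..k}"
      using Suc.prems(2) unfolding inj_on_def by fastforce
    show "\<forall>i\<le>k. 3 \<le> card (C (Suc i))" using Suc.prems(3) by simp
    show "\<forall>i\<in>{1..k}. C (Suc (i - 1)) \<inter> C (Suc i) = {e (Suc i)}"
    proof
      fix i assume i: "i \<in> {1..k}"
      then have "Suc i \<in> {1..Suc k}" by simp
      then have "C (Suc i - 1) \<inter> C (Suc i) = {e (Suc i)}" using Suc.prems(4) by blast
      moreover have "Suc (i - 1) = Suc i - 1" using i by simp
      ultimately show "C (Suc (i - 1)) \<inter> C (Suc i) = {e (Suc i)}" by simp
    qed
    show "e (Suc 0) \<in> C (Suc 0)" using e1 by simp
    show "1 \<le> k \<longrightarrow> e (Suc 0) \<noteq> e (Suc 1)"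
    proof
      assume "1 \<le> k"
      then have "1 \<in> {1..Suc k}" "2 \<in> {1..Suc k}" by auto
      then show "e (Suc 0) \<noteq> e (Suc 1)" using Suc.prems(2) unfolding inj_on_def by fastforce
    qed
    show "\<forall>i\<in>{1..k}. e' (Suc i) \<in> C (Suc (i - 1)) - {e (Suc (i - 1)), e (Suc i)}"
    proof
      fix i assume i: "i \<in> {1..k}"
      then have "Suc i \<in> {1..Suc k}" by simp
      then have "e' (Suc i) \<in> C (Suc i - 1) - {e (Suc i - 1), e (Suc i)}" using Suc.prems(7) by blast
      moreover have "Suc (i - 1) = Suc i - 1" using i by simp
      ultimately show "e' (Suc i) \<in> C (Suc (i - 1)) - {e (Suc (i - 1)), e (Suc i)}" by simp
    qed
    show "\<forall>i\<le>k. circuit (contr_seq M1 (\<lambda>i. C (Suc i)) (\<lambda>i. e (Suc i)) (\<lambda>i. e' (Suc i)) i) (C (Suc i))"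
    proof (intro allI impI)
      fix i assume "i \<le> k"
      then have "circuit (contr_seq M C e e' (Suc i)) (C (Suc i))" using Suc.prems(8) by (simp del: contr_seq.simps)
      then show "circuit (contr_seq M1 (\<lambda>i. C (Suc i)) (\<lambda>i. e (Suc i)) (\<lambda>i. e' (Suc i)) i) (C (Suc i))"
        unfolding seq_shift M1_def X_def .
    qed
  qed
  have part1: "\<exists>D. circuit M D \<and> e 0 \<in> D \<and> card D \<ge> Suc k + 2"
  proof -
    obtain D' where D': "circuit M1 D'" "e 1 \<in> D'" "card D' \<ge> k + 2" using IH by auto
    have "e 0 \<noteq> e 1" using Suc.prems(6) by simp
    then obtain Z where "circuit M Z" "e 0 \<in> Z" "card Z \<ge> card D' + 1"
      using step[OF fm c0 e1(1) e1'(1) Suc.prems(5) _ e1'(2)[symmetric] e1'(3)[symmetric] X_def, of D']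
        D' unfolding M1_def by blast
    then show ?thesis using D' by auto
  qed
  have part2: "\<forall>i\<le>Suc k. \<exists>D. circuit M D \<and> card D \<ge> card (C i)"
  proof (intro allI impI)
    fix i assume i: "i \<le> Suc k"
    show "\<exists>D. circuit M D \<and> card D \<ge> card (C i)"
    proof (cases i)
      case 0 then show ?thesis using c0 by auto
    next
      case (Suc j)
      then obtain D' where D': "circuit M1 D'" "card D' \<ge> card (C i)" using IH i by auto
      obtain D where D: "circuit M D" "D' \<subseteq> D" "D \<subseteq> D' \<union> X"
        using circuit_lift[OF fm indX] D'(1) unfolding M1_def by blast
      have "card D' \<le> card D" using card_mono[OF circuit_finite[OF fm D(1)] D(2)] .
      then show ?thesis using D D' by auto
    qed
  qed
  show ?case using part1 part2 by blast
qed

theorem corollary3p13: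
  fixes M :: "'a matroid" and k :: nat and e e' :: "nat \<Rightarrow> 'a"
    and C :: "nat \<Rightarrow> 'a set"
  assumes "finite_matroid M"
    and "inj_on e {1..k}"
    and "\<forall>i\<le>k. C i \<subseteq> ground M"
    and "\<forall>i\<le>k. card (C i) \<ge> 3"
    and "\<forall>i\<in>{1..k}. C (i - 1) \<inter> C i = {e i}"
    and "\<forall>i\<le>k. \<forall>j\<le>k. i + 2 \<le> j \<longrightarrow> C i \<inter> C j = {}"
    and "e 0 \<in> C 0" and "k \<ge> 1 \<longrightarrow> e 0 \<noteq> e 1"
    and "\<forall>i\<in>{1..k}. e' i \<in> C (i - 1) - {e (i - 1), e i}"
    and "\<forall>i\<le>k. circuit (contr_seq M C e e' i) (C i)"
  shows "\<exists>D. circuit M D \<and> real (card D) \<ge> sqrt (\<Sum>i\<le>k. real (card (C i)))"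
proof -
  have m: "(\<exists>D. circuit M D \<and> e 0 \<in> D \<and> card D \<ge> k + 2) \<and> (\<forall>i\<le>k. \<exists>D. circuit M D \<and> card D \<ge> card (C i))"
    using main[OF assms(1,2,4,5,7,8,9,10)] .
  define mx where "mx = Max ((\<lambda>i. card (C i)) ` {..k})"
  have "mx \<in> (\<lambda>i. card (C i)) ` {..k}" unfolding mx_def by (rule Max_in) auto
  then obtain i0 where i0: "i0 \<le> k" "card (C i0) = mx" by auto
  have le: "\<And>i. i \<le> k \<Longrightarrow> card (C i) \<le> mx" unfolding mx_def by (rule Max_ge) auto
  obtain D1 where D1: "circuit M D1" "card D1 \<ge> mx" using m i0 by metis
  obtain D2 where D2: "circuit M D2" "card D2 \<ge> k + 2" using m by blast
  obtain D where D: "circuit M D" "card D \<ge> mx" "card D \<ge> k + 1"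
  proof (cases "card D1 \<le> card D2")
    case True then show ?thesis using that[of D2] D1 D2 by auto
  next
    case False then show ?thesis using that[of D1] D1 D2 by auto
  qed
  have "(\<Sum>i\<le>k. real (card (C i))) \<le> (\<Sum>i\<le>k. real mx)"
    by (rule sum_mono) (simp add: le)
  also have "\<dots> = real (k + 1) * real mx" by simp
  also have "\<dots> \<le> real (card D) * real (card D)"
    by (rule mult_mono) (use D in auto)
  finally have "(\<Sum>i\<le>k. real (card (C i))) \<le> (real (card D))\<^sup>2" by (simp add: power2_eq_square)
  then have "sqrt (\<Sum>i\<le>k. real (card (C i))) \<le> real (card D)" by (intro real_le_lsqrt) auto
  then show ?thesis using D by blast
qed

end
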